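(* Let $p>2$ be an integer, $\theta\in(0,1)$, $\eta\ge0$. For $\bm q\in\mathbb S^{n-1}$ let $\rho=\tfrac12\min_{1\le i\le n}\min\{\|\bm q-\bm e_i\|_2^2,\|\bm q+\bm e_i\|_2^2\}$. Then $$\rho\le\frac{C_{\eta,p}}{\theta(1-\theta)}\Big(\theta(1+\eta^2)^{p/2}+(1-\theta)\eta^p-\mathbb E_\Omega\big(\|\bm q_\Omega\|_2^2+\eta^2\big)^{p/2}\Big),$$ where $C_{\eta,p}=\big((1+\eta^2)^{p/2}+\eta^p-2(0.5+\eta^2)^{p/2}\big)^{-1}$.
   Context: $\bm e_i$ are the standard basis vectors of $\mathbb R^n$. $\Omega$ denotes a random subset of $\{1,\dots,n\}$ in which each index is included independently with probability $\theta$, and $\bm q_\Omega$ is the subvector of $\bm q$ indexed by $\Omega$ (so $\|\bm q_\emptyset\|_2=0$). *)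

theory Defs
  imports "HOL-Analysis.Analysis" "HOL-Probability.Probability"
begin

definition random_subset :: "real \<Rightarrow> ('n::finite \<Rightarrow> bool) pmf" where
  "random_subset \<theta> = Pi_pmf UNIV False (\<lambda>_. bernoulli_pmf \<theta>)"

definition sub_norm_sq :: "real ^ 'n \<Rightarrow> 'n set \<Rightarrow> real" where
  "sub_norm_sq q \<Omega> = (\<Sum>i\<in>\<Omega>. (q $ i)^2)"

end

theory Submission
  imports Defs
begin


lemma powr_convex0:
  fixes r :: real assumes r: "r \<ge> 1"
  shows "convex_on {0..} (\<lambda>x::real. x powr r)"
proof (rule convex_onI)
  fix t x y :: real assume t: "0 < t" "t < 1" and x: "x \<in> {0..}" and y: "y \<in> {0..}"
  show "((1 - t) *\<^sub>R x + t *\<^sub>R y) powr r \<le> (1 - t) * x powr r + t * y powr r"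
  proof (cases "x = 0 \<or> y = 0")
    case True
    have sc: "(c * z) powr r \<le> c * z powr r" if "0 \<le> c" "c \<le> 1" "0 \<le> z" for c z :: real
    proof -
      have "(c * z) powr r = c powr r * z powr r" using that by (simp add: powr_mult)
      also have "c powr r \<le> c powr 1" using that r
        by (cases "c = 0") (auto intro: powr_le_one_le)
      hence "c powr r * z powr r \<le> c * z powr r" using that
        by (simp add: mult_right_mono)
      finally show ?thesis .
    qed
    show ?thesis using True
    proof
      assume "x = 0" thus ?thesis using sc[of t y] t y r by auto
    next
      assume "y = 0" thus ?thesis using sc[of "1-t" x] t x r by auto
    qed
  next
    case False
    hence "x \<in> {0<..}" "y \<in> {0<..}" using x y by auto
    from convex_onD[OF powr_convex[OF r] _ _ this] t show ?thesis by auto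
  qed
qed (simp add: convex_real_interval)

lemma pointwise:
  fixes r a s :: real
  defines "g \<equiv> \<lambda>x::real. x powr r"
  defines "K \<equiv> g (1+a) + g a - 2 * g (1/2 + a)"
  assumes r: "r \<ge> 1" and a: "a \<ge> 0" and s: "0 \<le> s" "s \<le> 1" and K: "K \<ge> 0"
  shows "g (s + a) \<le> (1-s) * g a + s * g (1+a) - K * (s * (1-s))"
proof -
  have cv: "convex_on {0..} g" unfolding g_def by (rule powr_convex0[OF r])
  show ?thesis
  proof (cases "s \<le> 1/2")
    case True
    have "g ((1 - 2* s) * a + (2* s) * (1/2 + a)) \<le> (1 - 2* s) * g a + (2* s) * g (1/2+a)"
      using convex_onD[OF cv, of "2* s" a "1/2+a"] True s a by auto
    moreover have "(1 - 2* s) * a + (2* s) * (1/2 + a) = s + a" by (simp add: algebra_simps)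
    ultimately have "g (s+a) \<le> (1 - 2* s) * g a + (2* s) * g (1/2+a)" by simp
    moreover have "0 \<le> K * s^2" using K by simp
    ultimately show ?thesis unfolding K_def by (simp add: algebra_simps power2_eq_square)
  next
    case False
    have "g ((1 - (2* s - 1)) * (1/2 + a) + (2* s - 1) * (1 + a)) \<le> (1 - (2* s - 1)) * g (1/2+a) + (2* s-1) * g (1+a)"
      using convex_onD[OF cv, of "2* s-1" "1/2+a" "1+a"] False s a by auto
    moreover have "(1 - (2* s - 1)) * (1/2 + a) + (2* s - 1) * (1 + a) = s + a" by (simp add: algebra_simps)
    ultimately have "g (s+a) \<le> (1 - (2* s - 1)) * g (1/2+a) + (2* s-1) * g (1+a)" by simp
    moreover have "0 \<le> K * (1-s)^2" using K by simp
    ultimately show ?thesis unfolding K_def by (simp add: algebra_simps power2_eq_square)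
  qed
qed

lemma Kpos:
  fixes r a :: real
  assumes r: "r > 1" and a: "a \<ge> 0"
  shows "(1+a) powr r + a powr r - 2 * (1/2 + a) powr r > 0"
proof (cases "a = 0")
  case True
  have "(1/2::real) powr r < (1/2) powr 1" using r by (intro powr_less_mono') auto
  thus ?thesis using True by simp
next
  case False
  hence a0: "a > 0" using a by simp
  have D: "DERIV (\<lambda>x. x powr r) x :> r * x powr (r - 1)" if "x > 0" for x :: real
    using that by (auto intro!: derivative_eq_intros simp: powr_diff field_simps)
  obtain z1 where z1: "a < z1" "z1 < 1/2 + a" and e1: "(1/2+a) powr r - a powr r = (1/2 + a - a) * (r * z1 powr (r-1))"
    using MVT2[of a "1/2+a" "\<lambda>x. x powr r" "\<lambda>x. r * x powr (r - 1)"] D a0 by force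
  obtain z2 where z2: "1/2+a < z2" "z2 < 1 + a" and e2: "(1+a) powr r - (1/2+a) powr r = (1 + a - (1/2+a)) * (r * z2 powr (r-1))"
    using MVT2[of "1/2+a" "1+a" "\<lambda>x. x powr r" "\<lambda>x. r * x powr (r - 1)"] D a0 by force
  have "z1 powr (r-1) < z2 powr (r-1)" using z1 z2 a0 r by (intro powr_less_mono2) auto
  hence "r * z1 powr (r-1) < r * z2 powr (r-1)" using r by simp
  thus ?thesis using e1 e2 by simp
qed



lemma integrable_rs[simp]:
  "integrable (measure_pmf (random_subset \<theta> :: ('n::finite \<Rightarrow> bool) pmf)) (f :: _ \<Rightarrow> real)"
  by (rule integrable_measure_pmf_finite) (rule finite_subset[OF subset_UNIV], simp)

lemma E1:
  assumes "0 \<le> \<theta>" "\<theta> \<le> 1"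
  shows "measure_pmf.expectation (random_subset \<theta> :: ('n::finite \<Rightarrow> bool) pmf)
           (\<lambda>\<omega>. if \<omega> i then 1 else 0) = \<theta>"
proof -
  have "map_pmf (\<lambda>f. f i) (random_subset \<theta> :: ('n \<Rightarrow> bool) pmf) = bernoulli_pmf \<theta>"
    unfolding random_subset_def by (subst Pi_pmf_component) auto
  hence "measure_pmf.expectation (map_pmf (\<lambda>f. f i) (random_subset \<theta> :: ('n \<Rightarrow> bool) pmf))
           (\<lambda>b. if b then 1 else 0) = \<theta>" using assms by simp
  thus ?thesis by simp
qed

lemma E2:
  assumes "0 \<le> \<theta>" "\<theta> \<le> 1" "i \<noteq> j"
  shows "measure_pmf.expectation (random_subset \<theta> :: ('n::finite \<Rightarrow> bool) pmf)
           (\<lambda>\<omega>. (if \<omega> i then 1 else 0) * (if \<omega> j then 1 else 0)) = \<theta>^2"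
proof -
  define f where "f = (\<lambda>k (v::bool). if k = i \<or> k = j then (if v then 1 else 0) else (1::real))"
  have pr: "(\<Prod>k\<in>UNIV. h k) = (\<Prod>k\<in>{i,j}. h k)" if "\<And>k. k \<noteq> i \<Longrightarrow> k \<noteq> j \<Longrightarrow> h k = 1"
    for h :: "'n \<Rightarrow> real"
    by (rule prod.mono_neutral_right) (use that in auto)
  have "measure_pmf.expectation (Pi_pmf UNIV False (\<lambda>_. bernoulli_pmf \<theta>)) (\<lambda>y. \<Prod>k\<in>UNIV. f k (y k))
      = (\<Prod>k\<in>UNIV. measure_pmf.expectation (bernoulli_pmf \<theta>) (\<lambda>v. f k v))"
  proof (rule expectation_prod_Pi_pmf)
    show "finite (UNIV :: 'n set)" by simp
    fix x :: 'n
    show "integrable (measure_pmf (bernoulli_pmf \<theta>)) (f x)"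
      by (rule integrable_measure_pmf_finite, rule finite_subset[OF subset_UNIV]) simp
    fix y show "0 \<le> f x y" by (simp add: f_def)
  qed
  also have "\<dots> = (\<Prod>k\<in>{i,j}. measure_pmf.expectation (bernoulli_pmf \<theta>) (\<lambda>v. f k v))"
    by (rule pr) (use assms in \<open>simp add: f_def\<close>)
  also have "\<dots> = \<theta>^2" using assms by (simp add: f_def power2_eq_square)
  finally have *: "measure_pmf.expectation (Pi_pmf UNIV False (\<lambda>_. bernoulli_pmf \<theta>)) (\<lambda>y. \<Prod>k\<in>UNIV. f k (y k)) = \<theta>^2" .
  have "(\<lambda>y::'n\<Rightarrow>bool. \<Prod>k\<in>UNIV. f k (y k)) = (\<lambda>\<omega>. (if \<omega> i then 1 else 0) * (if \<omega> j then 1 else 0))"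
  proof
    fix y :: "'n \<Rightarrow> bool"
    have "(\<Prod>k\<in>UNIV. f k (y k)) = (\<Prod>k\<in>{i,j}. f k (y k))" by (rule pr) (simp add: f_def)
    thus "(\<Prod>k\<in>UNIV. f k (y k)) = (if y i then 1 else 0) * (if y j then 1 else 0)"
      using assms by (simp add: f_def)
  qed
  with * show ?thesis unfolding random_subset_def by simp
qed



lemma normsq:
  fixes q :: "real ^ 'n::finite"
  shows "(norm (q - axis i 1))^2 = (norm q)^2 - 2 * q$i + 1"
    and "(norm (q + axis i 1))^2 = (norm q)^2 + 2 * q$i + 1"
  unfolding power2_norm_eq_inner
  by (simp_all add: inner_diff_left inner_diff_right inner_add_left
      inner_add_right inner_axis inner_commute[of "axis i 1" q] inner_axis_axis)

lemma sumsq: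
  fixes q :: "real ^ 'n::finite"
  shows "(norm q)^2 = (\<Sum>i\<in>UNIV. (q$i)^2)"
  unfolding power2_norm_eq_inner inner_vec_def by (simp add: power2_eq_square)

lemma subn:
  fixes q :: "real ^ 'n::finite"
  shows "sub_norm_sq q {i. \<omega> i} = (\<Sum>i\<in>UNIV. (q$i)^2 * (if \<omega> i then 1 else 0))"
  unfolding sub_norm_sq_def by (simp add: if_distrib sum.If_cases)


lemma cancel_KT: "K \<noteq> 0 \<Longrightarrow> c \<noteq> 0 \<Longrightarrow> (1/K)/c * (K*c*T) = (T::real)"
  by (simp add: field_simps)

theorem mainTheorem11:
  fixes q :: "real ^ 'n::finite" and p :: nat and \<theta> \<eta> :: real
  assumes "p > 2" and "0 < \<theta>" and "\<theta> < 1" and "\<eta> \<ge> 0" and "norm q = 1"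
  shows "(1/2) * (MIN i. min ((norm (q - axis i 1))^2) ((norm (q + axis i 1))^2))
    \<le> (1 / ((1 + \<eta>^2) powr (p/2) + \<eta>^p - 2 * (0.5 + \<eta>^2) powr (p/2)))
       / (\<theta> * (1 - \<theta>))
       * (\<theta> * (1 + \<eta>^2) powr (p/2) + (1 - \<theta>) * \<eta>^p
          - measure_pmf.expectation (random_subset \<theta>)
              (\<lambda>\<omega>. (sub_norm_sq q {i. \<omega> i} + \<eta>^2) powr (p/2)))"
proof -
  define r :: real where "r = real p / 2"
  define a where "a = \<eta>^2"
  define g where "g = (\<lambda>x::real. x powr r)"
  define K where "K = g (1+a) + g a - 2 * g (1/2 + a)"
  define x where "x = (\<lambda>i. (q$i)^2)"
  define B where "B = (\<lambda>i (\<omega>::'n \<Rightarrow> bool). if \<omega> i then 1 else (0::real))"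
  define S where "S = (\<lambda>\<omega>. \<Sum>i\<in>UNIV. x i * B i \<omega>)"
  define P where "P = (random_subset \<theta> :: ('n \<Rightarrow> bool) pmf)"
  define T where "T = 1 - (\<Sum>i\<in>UNIV. (x i)^2)"
  have r1: "r > 1" using assms(1) unfolding r_def by simp
  have a0: "a \<ge> 0" unfolding a_def by simp
  have Kpos: "K > 0" unfolding K_def g_def using Kpos[OF r1 a0] .
  have etap: "\<eta>^p = g a"
  proof (cases "\<eta> = 0")
    case True thus ?thesis using assms(1) by (simp add: g_def a_def r_def)
  next
    case False
    hence "\<eta> > 0" using assms(4) by simp
    have "\<eta>^2 = \<eta> powr (real 2)" using \<open>\<eta> > 0\<close> by (rule powr_realpow[symmetric])
    hence "g a = (\<eta> powr (real 2)) powr r" unfolding g_def a_def by simp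
    also have "\<dots> = \<eta> powr (2 * r)" by (simp add: powr_powr)
    finally have "g a = \<eta> powr (2 * r)" .
    also have "\<dots> = \<eta> powr (real p)" by (simp add: r_def)
    also have "\<dots> = \<eta>^p" using \<open>\<eta> > 0\<close> by (rule powr_realpow)
    finally show ?thesis by simp
  qed
  have sumx: "(\<Sum>i\<in>UNIV. x i) = 1" using sumsq[of q] assms(5) unfolding x_def by simp
  have x0: "x i \<ge> 0" for i unfolding x_def by simp
  have S01: "0 \<le> S \<omega> \<and> S \<omega> \<le> 1" for \<omega>
  proof
    show "0 \<le> S \<omega>" unfolding S_def B_def by (intro sum_nonneg) (simp add: x0)
    have "S \<omega> \<le> (\<Sum>i\<in>UNIV. x i)" unfolding S_def B_def by (intro sum_mono) (simp add: x0)
    thus "S \<omega> \<le> 1" using sumx by simp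
  qed
  have Ssub: "sub_norm_sq q {i. \<omega> i} = S \<omega>" for \<omega>
    unfolding S_def x_def B_def by (rule subn)
  have th: "0 \<le> \<theta>" "\<theta> \<le> 1" using assms by auto
  have EB: "measure_pmf.expectation P (B i) = \<theta>" for i
    unfolding P_def B_def by (rule E1[OF th])
  have EBB: "measure_pmf.expectation P (\<lambda>\<omega>. B i \<omega> * B j \<omega>) = (if i = j then \<theta> else \<theta>^2)" for i j
  proof (cases "i = j")
    case True
    have "(\<lambda>\<omega>. B i \<omega> * B j \<omega>) = B i" using True by (auto simp: B_def)
    thus ?thesis using EB True by simp
  next
    case False thus ?thesis unfolding P_def B_def using E2[OF th False] by simp
  qed
  have ES: "measure_pmf.expectation P S = \<theta>"
  proof -
    have "measure_pmf.expectation P S = (\<Sum>i\<in>UNIV. x i * measure_pmf.expectation P (B i))"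
      unfolding S_def P_def by (simp add: Bochner_Integration.integral_sum)
    also have "\<dots> = \<theta>" using sumx by (simp add: EB sum_distrib_right[symmetric])
    finally show ?thesis .
  qed
  have ES2: "measure_pmf.expectation P (\<lambda>\<omega>. S \<omega> * S \<omega>) = \<theta>^2 + (\<theta> - \<theta>^2) * (\<Sum>i\<in>UNIV. (x i)^2)"
  proof -
    have "(\<lambda>\<omega>. S \<omega> * S \<omega>) = (\<lambda>\<omega>. \<Sum>i\<in>UNIV. \<Sum>j\<in>UNIV. x i * x j * (B i \<omega> * B j \<omega>))"
      unfolding S_def by (simp add: sum_product algebra_simps)
    hence "measure_pmf.expectation P (\<lambda>\<omega>. S \<omega> * S \<omega>) =
        (\<Sum>i\<in>UNIV. \<Sum>j\<in>UNIV. x i * x j * measure_pmf.expectation P (\<lambda>\<omega>. B i \<omega> * B j \<omega>))"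
      unfolding P_def by (simp add: Bochner_Integration.integral_sum)
    also have "\<dots> = (\<Sum>i\<in>UNIV. \<Sum>j\<in>UNIV. \<theta>^2 * (x i * x j) + (if i = j then (\<theta> - \<theta>^2) * (x i)^2 else 0))"
      by (intro sum.cong refl) (auto simp: EBB power2_eq_square algebra_simps)
    also have "\<dots> = (\<Sum>i\<in>UNIV. \<Sum>j\<in>UNIV. (\<theta>^2 * x i) * x j) + (\<Sum>i\<in>UNIV. (\<theta> - \<theta>^2) * (x i)^2)"
      by (simp add: sum.distrib mult.assoc)
    also have "\<dots> = (\<Sum>i\<in>UNIV. \<theta>^2 * x i) + (\<theta> - \<theta>^2) * (\<Sum>i\<in>UNIV. (x i)^2)"
      by (simp add: sum_distrib_left[symmetric] sumx)
    also have "\<dots> = \<theta>^2 + (\<theta> - \<theta>^2) * (\<Sum>i\<in>UNIV. (x i)^2)"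
      by (simp add: sum_distrib_left[symmetric] sumx)
    finally show ?thesis .
  qed
  have ptw: "g (S \<omega> + a) \<le> (1 - S \<omega>) * g a + S \<omega> * g (1+a) - K * (S \<omega> * (1 - S \<omega>))" for \<omega>
    unfolding g_def K_def using pointwise[OF _ a0, of r "S \<omega>"] r1 S01[of \<omega>] Kpos
    unfolding g_def K_def by auto
  have Eg: "measure_pmf.expectation P (\<lambda>\<omega>. g (S \<omega> + a))
      \<le> measure_pmf.expectation P (\<lambda>\<omega>. (1 - S \<omega>) * g a + S \<omega> * g (1+a) - K * (S \<omega> - S \<omega> * S \<omega>))"
    unfolding P_def using ptw by (intro integral_mono) (auto simp: algebra_simps)
  also have "\<dots> = g a - \<theta> * g a + \<theta> * g (1+a) - K * (\<theta> - (\<theta>^2 + (\<theta> - \<theta>^2) * (\<Sum>i\<in>UNIV. (x i)^2)))"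
  proof -
    have "measure_pmf.expectation P (\<lambda>\<omega>. (1 - S \<omega>) * g a + S \<omega> * g (1+a) - K * (S \<omega> - S \<omega> * S \<omega>))
       = g a - measure_pmf.expectation P S * g a + measure_pmf.expectation P S * g (1+a)
         - K * (measure_pmf.expectation P S - measure_pmf.expectation P (\<lambda>\<omega>. S \<omega> * S \<omega>))"
      unfolding P_def by (simp add: algebra_simps)
    thus ?thesis by (simp only: ES ES2)
  qed
  finally have D: "\<theta> * g (1+a) + (1-\<theta>) * g a - measure_pmf.expectation P (\<lambda>\<omega>. g (S \<omega> + a))
     \<ge> K * (\<theta> * (1 - \<theta>)) * T"
    unfolding T_def by (simp add: algebra_simps power2_eq_square)
  obtain j where j: "\<And>i. \<bar>q$i\<bar> \<le> \<bar>q$j\<bar>"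
  proof -
    have "Max (range (\<lambda>i. \<bar>q$i\<bar>)) \<in> range (\<lambda>i. \<bar>q$i\<bar>)" by (intro Max_in) auto
    then obtain j where "Max (range (\<lambda>i. \<bar>q$i\<bar>)) = \<bar>q$j\<bar>" by (metis imageE)
    moreover have "\<bar>q$i\<bar> \<le> Max (range (\<lambda>i. \<bar>q$i\<bar>))" for i by (intro Max_ge) auto
    ultimately show ?thesis using that by metis
  qed
  define F where "F = (\<lambda>i. min ((norm (q - axis i 1))^2) ((norm (q + axis i 1))^2))"
  have "(MIN i. F i) \<le> F j" by (intro Min_le) auto
  also have "F j \<le> 2 - 2 * \<bar>q$j\<bar>"
    unfolding F_def normsq assms(5) by (cases "q$j \<ge> 0") auto
  finally have L1: "(1/2) * (MIN i. F i) \<le> 1 - \<bar>q$j\<bar>" by simp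
  have xj: "x i \<le> x j" for i unfolding x_def using j[of i]
    by (metis abs_ge_zero power2_abs power_mono)
  have "(\<Sum>i\<in>UNIV. (x i)^2) \<le> (\<Sum>i\<in>UNIV. x i * x j)"
    by (intro sum_mono) (simp add: power2_eq_square mult_left_mono x0 xj)
  also have "\<dots> = x j" using sumx by (simp add: sum_distrib_right[symmetric])
  finally have s2: "(\<Sum>i\<in>UNIV. (x i)^2) \<le> x j" .
  have "x j \<le> 1" using xj sumx
    by (metis x0 sum_nonneg_leq_bound finite UNIV_I)
  hence qj1: "\<bar>q$j\<bar> \<le> 1" unfolding x_def by (simp add: abs_square_le_1)
  have "x j \<le> \<bar>q$j\<bar>" unfolding x_def using qj1
    by (metis abs_ge_zero power2_abs power2_eq_square mult_left_le)
  hence LT: "(1/2) * (MIN i. F i) \<le> T" using L1 s2 unfolding T_def by linarith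
  have thp: "\<theta> * (1 - \<theta>) > 0" using assms by simp
  have "T = (1 / K) / (\<theta> * (1 - \<theta>)) * (K * (\<theta> * (1 - \<theta>)) * T)" using Kpos thp by (intro cancel_KT[symmetric]) auto
  also have "\<dots> \<le> (1 / K) / (\<theta> * (1 - \<theta>)) *
      (\<theta> * g (1+a) + (1-\<theta>) * g a - measure_pmf.expectation P (\<lambda>\<omega>. g (S \<omega> + a)))"
    using D Kpos thp by (intro mult_left_mono) auto
  finally have main: "(1/2) * (MIN i. F i) \<le> (1 / K) / (\<theta> * (1 - \<theta>)) *
      (\<theta> * g (1+a) + (1-\<theta>) * g a - measure_pmf.expectation P (\<lambda>\<omega>. g (S \<omega> + a)))"
    using LT by linarith
  have e1: "(\<lambda>\<omega>. (sub_norm_sq q {i. \<omega> i} + \<eta>^2) powr (p/2)) = (\<lambda>\<omega>. g (S \<omega> + a))"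
    by (simp add: Ssub g_def a_def r_def)
  have e2: "K = (1 + \<eta>^2) powr (p/2) + \<eta>^p - 2 * (0.5 + \<eta>^2) powr (p/2)"
    unfolding K_def etap by (simp add: g_def a_def r_def)
  have e3: "(1 + \<eta>^2) powr (p/2) = g (1+a)" by (simp add: g_def a_def r_def)
  have e4: "(0.5 + \<eta>^2) powr (p/2) = g (1/2+a)" by (simp add: g_def a_def r_def)
  show ?thesis unfolding etap e3 e4 e1 using main unfolding F_def P_def K_def .
qed

end
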